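(* Let $p_0=2,p_1=3,p_2=5,\dots$ be the primes in increasing order. For every $n\ge1$, $$msr_n(SP_1)\;\ge\;p_{n-1}\qquad\text{and}\qquad msr_{n+1}(SP_0)\;\ge\;2\,p_{n-1},$$ where $msr_n(SP_1)$ is the maximum series without units of $n$-fillings formed by grids with modules $p_1,\dots,p_n$, and $msr_{n+1}(SP_0)$ is the maximum series without units of $(n+1)$-fillings formed by grids with modules $p_0,\dots,p_n$.
   Context: A grid $S(a)$ of module $a\ge1$ with shift $k$ is the sequence $(l_j)_{j\in\mathbb Z}$ with $l_j=0$ iff $j\equiv k\pmod a$, else $l_j=1$. Products of grids are elementwise logical ANDs; an $n$-filling with modules $a_1,\dots,a_n$ is such a product (arbitrary shifts) in which omitting any grid changes the product. $SP_1$ is the system of grids with modules $3,5,7,11,\dots$ (all odd primes) and $SP_0$ the system with modules $2,3,5,7,\dots$ (all primes). A $0$-series is a segment between positions $i<k$ with $l_i=l_k=1$ and no ones strictly between; its length is $k-i$. The maximum series is the supremum over all shifts of the largest length of a $0$-series. *)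

theory Defs
  imports "HOL-Computational_Algebra.Primes" "HOL-Library.Extended_Nat" "HOL-Library.Infinite_Set"
begin

definition nthp :: "nat \<Rightarrow> nat" where
  "nthp j = Infinite_Set.enumerate {q. prime q} j"

text \<open>Grid S(a) with shift k: value True (= 1) at position j unless j = k mod a (value 0).\<close>
definition grid :: "nat \<Rightarrow> int \<Rightarrow> int \<Rightarrow> bool" where
  "grid a k j = (j mod int a \<noteq> k mod int a)"

definition gprod :: "nat list \<Rightarrow> int list \<Rightarrow> int \<Rightarrow> bool" where
  "gprod ms ks j = (\<forall>i<length ms. grid (ms ! i) (ks ! i) j)"

definition gprod_omit :: "nat list \<Rightarrow> int list \<Rightarrow> nat \<Rightarrow> int \<Rightarrow> bool" where
  "gprod_omit ms ks r j = (\<forall>i<length ms. i \<noteq> r \<longrightarrow> grid (ms ! i) (ks ! i) j)"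

definition is_filling :: "nat list \<Rightarrow> int list \<Rightarrow> bool" where
  "is_filling ms ks \<longleftrightarrow> length ks = length ms \<and>
     (\<forall>r<length ms. gprod_omit ms ks r \<noteq> gprod ms ks)"

definition zero_series :: "(int \<Rightarrow> bool) \<Rightarrow> int \<Rightarrow> int \<Rightarrow> bool" where
  "zero_series l i k \<longleftrightarrow> i < k \<and> l i \<and> l k \<and> (\<forall>j. i < j \<and> j < k \<longrightarrow> \<not> l j)"

definition msr :: "nat list \<Rightarrow> enat" where
  "msr ms = Sup {enat (nat (k - i)) | ks i k. is_filling ms ks \<and> zero_series (gprod ms ks) i k}"

end

theory Submission imports Defs begin

lemma inf_primes: "infinite {q::nat. prime q}" using primes_infinite by simp

lemma nthp_prime: "prime (nthp j)"
  using enumerate_in_set[OF inf_primes] unfolding nthp_def by simp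

lemma nthp_less_iff: "nthp i < nthp j \<longleftrightarrow> i < j"
  unfolding nthp_def using inf_primes by simp

lemma nthp_inj: "nthp i = nthp j \<longleftrightarrow> i = j"
  by (metis nthp_less_iff not_less_iff_gr_or_eq)

lemma nthp_0: "nthp 0 = 2"
  unfolding nthp_def enumerate_0 by (rule Least_equality) (auto simp: prime_ge_2_nat)

lemma nthp_surj: "prime q \<Longrightarrow> \<exists>j. nthp j = q"
  unfolding nthp_def using enumerate_Ex[OF inf_primes] by simp

lemma prime_below: "prime q \<Longrightarrow> q < nthp m \<Longrightarrow> \<exists>j<m. nthp j = q"
  using nthp_surj nthp_less_iff by blast

lemma nthp_ge3: "j \<ge> 1 \<Longrightarrow> nthp j \<ge> 3"
  using nthp_less_iff[of 0 j] nthp_0 by simp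

lemma nthp_odd: "j \<ge> 1 \<Longrightarrow> odd (nthp j)"
  using nthp_ge3 prime_odd_nat nthp_prime by (metis Suc_le_eq numeral_3_eq_3 numeral_2_eq_2)

lemma gprod_upt: "gprod (map g [a..<b]) (map f [a..<b]) y \<longleftrightarrow> (\<forall>j\<in>{a..<b}. grid (g j) (f j) y)"
proof
  assume "gprod (map g [a..<b]) (map f [a..<b]) y"
  hence H: "\<forall>i<b-a. grid (g (a+i)) (f (a+i)) y" unfolding gprod_def by simp
  show "\<forall>j\<in>{a..<b}. grid (g j) (f j) y"
  proof
    fix j assume "j \<in> {a..<b}"
    hence "j-a < b-a" "a + (j-a) = j" by auto
    thus "grid (g j) (f j) y" using H[rule_format, of "j-a"] by simp
  qed
qed (auto simp: gprod_def)

lemma gprod_omit_upt: "gprod_omit (map g [a..<b]) (map f [a..<b]) r y \<longleftrightarrow> (\<forall>j\<in>{a..<b}. j \<noteq> a + r \<longrightarrow> grid (g j) (f j) y)"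
proof
  assume "gprod_omit (map g [a..<b]) (map f [a..<b]) r y"
  hence H: "\<forall>i<b-a. i \<noteq> r \<longrightarrow> grid (g (a+i)) (f (a+i)) y" unfolding gprod_omit_def by simp
  show "\<forall>j\<in>{a..<b}. j \<noteq> a + r \<longrightarrow> grid (g j) (f j) y"
  proof (intro ballI impI)
    fix j assume "j \<in> {a..<b}" "j \<noteq> a + r"
    thus "grid (g j) (f j) y" using H[rule_format, of "j-a"] by auto
  qed
qed (auto simp: gprod_omit_def)

lemma series_exists:
  fixes L :: "int \<Rightarrow> bool"
  assumes "u < lo" "L u" "hi < v" "L v" "\<forall>y. lo \<le> y \<and> y \<le> hi \<longrightarrow> \<not> L y" "lo \<le> hi + 1"
  shows "\<exists>i k. zero_series L i k \<and> hi - lo + 2 \<le> k - i"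
proof -
  define A where "A = {j. u \<le> j \<and> j < lo \<and> L j}"
  define B where "B = {j. hi < j \<and> j \<le> v \<and> L j}"
  have fA: "finite A" unfolding A_def by (rule finite_subset[of _ "{u..<lo}"]) auto
  have fB: "finite B" unfolding B_def by (rule finite_subset[of _ "{hi<..v}"]) auto
  have uA: "u \<in> A" using assms unfolding A_def by auto
  have vB: "v \<in> B" using assms unfolding B_def by auto
  define i where "i = Max A"
  define k where "k = Min B"
  have iA: "i \<in> A" unfolding i_def using fA uA Max_in by blast
  have kB: "k \<in> B" unfolding k_def using fB vB Min_in by blast
  have iM: "j \<in> A \<Longrightarrow> j \<le> i" for j unfolding i_def using fA by simp
  have kM: "j \<in> B \<Longrightarrow> k \<le> j" for j unfolding k_def using fB by simp
  have "zero_series L i k"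
    unfolding zero_series_def
  proof (intro conjI allI impI)
    show "i < k" using iA kB assms unfolding A_def B_def by auto
    show "L i" using iA unfolding A_def by auto
    show "L k" using kB unfolding B_def by auto
    fix j assume j: "i < j \<and> j < k"
    show "\<not> L j"
    proof
      assume Lj: "L j"
      show False
      proof (cases "j < lo")
        case True
        hence "j \<in> A" using j iA Lj unfolding A_def by auto
        thus False using iM j by force
      next
        case False
        show False
        proof (cases "hi < j")
          case True
          hence "j \<in> B" using j kB Lj unfolding B_def by auto
          thus False using kM j by force
        next
          case False2: False
          thus False using False Lj assms(5) by auto
        qed
      qed
    qed
  qed
  moreover have "hi - lo + 2 \<le> k - i" using iA kB unfolding A_def B_def by auto
  ultimately show ?thesis by blast
qed

lemma frame:
  fixes X :: "int \<Rightarrow> int" and e f :: "nat \<Rightarrow> int" and lo hi u v :: int and P :: nat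
  assumes gi: "\<And>j y. j \<in> {a..<b} \<Longrightarrow> grid (nthp j) (f j) y \<longleftrightarrow> \<not> int (nthp j) dvd X y - e j"
  and wit: "\<And>j. j \<in> {a..<b} \<Longrightarrow> \<exists>y. int (nthp j) dvd X y - e j \<and> (\<forall>j'\<in>{a..<b}. j' \<noteq> j \<longrightarrow> \<not> int (nthp j') dvd X y - e j')"
  and zeros: "\<And>y. lo \<le> y \<Longrightarrow> y \<le> hi \<Longrightarrow> \<exists>j\<in>{a..<b}. int (nthp j) dvd X y - e j"
  and u: "u < lo" "\<forall>j\<in>{a..<b}. \<not> int (nthp j) dvd X u - e j"
  and v: "hi < v" "\<forall>j\<in>{a..<b}. \<not> int (nthp j) dvd X v - e j"
  and len: "int P \<le> hi - lo + 2" and lh: "lo \<le> hi + 1"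
  shows "enat P \<le> msr (map nthp [a..<b])"
proof -
  define ks where "ks = map f [a..<b]"
  let ?L = "gprod (map nthp [a..<b]) ks"
  have L: "?L y \<longleftrightarrow> (\<forall>j\<in>{a..<b}. \<not> int (nthp j) dvd X y - e j)" for y
    unfolding ks_def gprod_upt using gi by auto
  have fill: "is_filling (map nthp [a..<b]) ks"
    unfolding is_filling_def
  proof (intro conjI allI impI)
    show "length ks = length (map nthp [a..<b])" by (simp add: ks_def)
    fix r assume r: "r < length (map nthp [a..<b])"
    hence j: "a + r \<in> {a..<b}" by simp
    obtain y where y: "int (nthp (a+r)) dvd X y - e (a+r)"
       "\<forall>j'\<in>{a..<b}. j' \<noteq> a+r \<longrightarrow> \<not> int (nthp j') dvd X y - e j'" using wit[OF j] by blast
    have "gprod_omit (map nthp [a..<b]) ks r y" unfolding ks_def gprod_omit_upt using y(2) gi by auto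
    moreover have "\<not> ?L y" using L y(1) j by blast
    ultimately show "gprod_omit (map nthp [a..<b]) ks r \<noteq> ?L" by auto
  qed
  have "\<forall>y. lo \<le> y \<and> y \<le> hi \<longrightarrow> \<not> ?L y" using zeros L by blast
  then obtain i k where ik: "zero_series ?L i k" "hi - lo + 2 \<le> k - i"
    using series_exists[of u lo ?L hi v] u v L lh by blast
  have "enat (nat (k-i)) \<in> {enat (nat (k - i)) | ks i k. is_filling (map nthp [a..<b]) ks \<and> zero_series (gprod (map nthp [a..<b]) ks) i k}"
    using fill ik(1) by blast
  hence "enat (nat (k-i)) \<le> msr (map nthp [a..<b])" unfolding msr_def by (rule Sup_upper)
  moreover have "enat P \<le> enat (nat (k-i))" using ik len by simp
  ultimately show ?thesis by (meson order_trans)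
qed


lemma small_ndvd: "0 < x \<Longrightarrow> x < int q \<Longrightarrow> \<not> int q dvd x"
  using zdvd_imp_le by fastforce

lemma small_ndvd': "0 < x \<Longrightarrow> x < int q \<Longrightarrow> \<not> int q dvd - x"
  using small_ndvd by simp

definition ee :: "nat \<Rightarrow> nat \<Rightarrow> int" where
  "ee n j = (if j = n-1 then 1 else if j = n then -1 else 0)"

definition wx :: "nat \<Rightarrow> nat \<Rightarrow> int" where
  "wx n j = (if j = n-1 then 1 else if j = n then -1 else int (nthp j))"

lemma basics:
  assumes "n \<ge> 2"
  shows "nthp (n-1) \<ge> 3" "nthp (n-1) < nthp n" "\<And>j. j < n - 1 \<Longrightarrow> nthp j < nthp (n-1)"
  using assms nthp_ge3[of "n-1"] nthp_less_iff by auto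

lemma primes_dvd_eq: "int (nthp i) dvd int (nthp j) \<Longrightarrow> i = j"
  using nthp_prime nthp_inj primes_dvd_imp_eq by (metis int_dvd_int_iff)

lemma witx:
  assumes n: "n \<ge> 2" and j: "j \<le> n"
  shows "int (nthp j) dvd wx n j - ee n j \<and> (\<forall>j'\<le>n. j' \<noteq> j \<longrightarrow> \<not> int (nthp j') dvd wx n j - ee n j')"
proof -
  note b = basics[OF n]
  have q2: "nthp i \<ge> 2" for i using nthp_prime prime_ge_2_nat by blast
  consider "j = n-1" | "j = n" | "j < n-1" using j by linarith
  thus ?thesis
  proof cases
    case 1
    have "\<not> int (nthp j') dvd wx n j - ee n j'" if "j' \<le> n" "j' \<noteq> j" for j'
    proof (cases "j' = n")
      case True thus ?thesis using 1 n b small_ndvd[of 2 "nthp n"] by (simp add: wx_def ee_def)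
    next
      case False
      thus ?thesis using 1 n that small_ndvd[of 1 "nthp j'"] q2[of j'] by (simp add: wx_def ee_def)
    qed
    thus ?thesis using 1 by (simp add: wx_def ee_def)
  next
    case 2
    have "\<not> int (nthp j') dvd wx n j - ee n j'" if "j' \<le> n" "j' \<noteq> j" for j'
    proof (cases "j' = n-1")
      case True thus ?thesis using 2 n b small_ndvd'[of 2 "nthp (n-1)"] by (simp add: wx_def ee_def)
    next
      case False
      thus ?thesis using 2 n that small_ndvd'[of 1 "nthp j'"] q2[of j'] by (simp add: wx_def ee_def)
    qed
    thus ?thesis using 2 n by (simp add: wx_def ee_def)
  next
    case 3
    have qlt: "nthp j < nthp (n-1)" using b 3 by blast
    have jn: "j \<noteq> n-1" "j \<noteq> n" "n \<noteq> n - 1" using 3 n by auto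
    have "\<not> int (nthp j') dvd wx n j - ee n j'" if jj: "j' \<le> n" "j' \<noteq> j" for j'
    proof -
      consider "j' = n-1" | "j' = n" | "j' < n-1" using jj by linarith
      thus ?thesis
      proof cases
        case 1 thus ?thesis using jn qlt q2[of j] small_ndvd[of "int (nthp j) - 1" "nthp (n-1)"]
          by (simp add: wx_def ee_def)
      next
        case 2 thus ?thesis using jn qlt b q2[of j] small_ndvd[of "int (nthp j) + 1" "nthp n"]
          by (simp add: wx_def ee_def)
      next
        case 4: 3
        hence "j' \<noteq> n-1" "j' \<noteq> n" by auto
        hence ew: "ee n j' = 0" "wx n j = int (nthp j)" using jn by (simp_all add: ee_def wx_def)
        show ?thesis
        proof
          assume "int (nthp j') dvd wx n j - ee n j'"
          hence "int (nthp j') dvd int (nthp j)" using ew by simp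
          thus False using primes_dvd_eq[of j' j] jj by blast
        qed
      qed
    qed
    thus ?thesis using 3 by (simp add: wx_def ee_def)
  qed
qed

lemma zerox:
  assumes n: "n \<ge> 2" and x: "\<bar>x\<bar> < int (nthp (n-1))"
  shows "\<exists>j\<le>n. int (nthp j) dvd x - ee n j \<and> (odd x \<longrightarrow> j \<ge> 1)"
proof -
  note b = basics[OF n]
  consider "x = 0" | "x = 1" | "x = -1" | "\<bar>x\<bar> \<ge> 2" by linarith
  thus ?thesis
  proof cases
    case 1 thus ?thesis using n by (intro exI[of _ 0]) (simp add: ee_def)
  next
    case 2 thus ?thesis using n by (intro exI[of _ "n-1"]) (simp add: ee_def)
  next
    case 3
    have "n \<noteq> n - 1" using n by simp
    thus ?thesis using 3 by (intro exI[of _ n]) (simp add: ee_def)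
  next
    case 4
    hence "nat \<bar>x\<bar> \<noteq> 1" by simp
    then obtain q where q: "prime q" "q dvd nat \<bar>x\<bar>" using prime_factor_nat by blast
    have "q \<le> nat \<bar>x\<bar>" using q 4 dvd_imp_le by fastforce
    hence "q < nthp (n-1)" using x by linarith
    then obtain j where j: "j < n-1" "nthp j = q" using prime_below q by blast
    have "int q dvd int (nat \<bar>x\<bar>)" using q(2) by (simp only: int_dvd_int_iff)
    hence dx: "int q dvd x" by simp
    have e0: "ee n j = 0" using j by (simp add: ee_def)
    have "odd x \<longrightarrow> j \<ge> 1"
    proof
      assume "odd x"
      hence "q \<noteq> 2" using dx by (metis dvd_trans even_numeral of_nat_numeral)
      thus "j \<ge> 1" using j nthp_0 by (metis less_one linorder_not_less)
    qed
    thus ?thesis using j dx e0 by (intro exI[of _ j]) auto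
  qed
qed

lemma onex:
  assumes n: "n \<ge> 2" and j: "j \<le> n" and c: "int (nthp j) dvd c"
  shows "\<not> int (nthp j) dvd (- int (nthp (n-1)) + c) - ee n j"
proof -
  note b = basics[OF n]
  have NA: "\<not> int (nthp j) dvd - int (nthp (n-1)) - ee n j"
  proof -
    consider "j = n-1" | "j = n" | "j < n-1" using j by linarith
    thus ?thesis
    proof cases
      case 1
      have ee1: "ee n j = 1" using 1 by (simp add: ee_def)
      show ?thesis
      proof
        assume H: "int (nthp j) dvd - int (nthp (n-1)) - ee n j"
        have "int (nthp j) dvd (- int (nthp (n-1)) - ee n j) + int (nthp j)"
          using H by (rule dvd_add) simp
        hence "int (nthp j) dvd - 1" using ee1 1 by simp
        thus False using small_ndvd'[of 1 "nthp j"] b 1 by simp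
      qed
    next
      case 2
      hence "- int (nthp (n-1)) - ee n j = - (int (nthp (n-1)) - 1)" using n by (simp add: ee_def)
      thus ?thesis using small_ndvd'[of "int (nthp (n-1)) - 1" "nthp n"] b 2 by simp
    next
      case 3
      hence "ee n j = 0" by (simp add: ee_def)
      thus ?thesis using primes_dvd_eq[of j "n-1"] 3 by (simp, blast)
    qed
  qed
  have eq: "(- int (nthp (n-1)) + c) - ee n j = (- int (nthp (n-1)) - ee n j) + c" by simp
  show ?thesis unfolding eq dvd_add_left_iff[OF c] by (rule NA)
qed

definition MM :: "nat \<Rightarrow> int" where "MM n = (\<Prod>j\<in>{0..n}. int (nthp j))"

lemma MM: "MM n \<ge> 1" "j \<le> n \<Longrightarrow> int (nthp j) dvd MM n"
proof -
  show "MM n \<ge> 1" unfolding MM_def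
    by (rule prod_ge_1) (use nthp_prime prime_ge_1_nat in auto)
  show "j \<le> n \<Longrightarrow> int (nthp j) dvd MM n" unfolding MM_def by (rule dvd_prodI) auto
qed

lemma grid_dvd: "grid q k y \<longleftrightarrow> \<not> int q dvd y - k"
  unfolding grid_def by (simp add: mod_eq_dvd_iff)

lemma grid_odd:
  assumes "odd q" "int q dvd 2*k+1 - e"
  shows "grid q k y \<longleftrightarrow> \<not> int q dvd 2*y+1 - e"
proof -
  have cp: "coprime (int q) 2" using assms(1) by simp
  have eq: "2*y+1 - e = 2*(y-k) + (2*k+1-e)" by (simp add: algebra_simps)
  have "int q dvd 2*y+1 - e \<longleftrightarrow> int q dvd 2*(y-k)"
    unfolding eq by (rule dvd_add_left_iff[OF assms(2)])
  also have "\<dots> \<longleftrightarrow> int q dvd y - k" using cp coprime_dvd_mult_right_iff by blast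
  finally show ?thesis by (simp add: grid_dvd)
qed

definition fA :: "nat \<Rightarrow> nat \<Rightarrow> int" where
  "fA n j = (if j = n-1 then 0 else if j = n then -1 else (int (nthp j) - 1) div 2)"

lemma fA_dvd:
  assumes n: "n \<ge> 2" and j: "j \<ge> 1"
  shows "int (nthp j) dvd 2 * fA n j + 1 - ee n j"
proof -
  have nn: "n \<noteq> n - 1" using n by simp
  consider "j = n-1" | "j = n" | "j \<noteq> n-1" "j \<noteq> n" by blast
  thus ?thesis
  proof cases
    case 1 thus ?thesis by (simp add: fA_def ee_def)
  next
    case 2 thus ?thesis using nn by (simp add: fA_def ee_def)
  next
    case 3
    obtain k where k: "nthp j = 2*k+1" using nthp_odd[OF j] oddE by blast
    have "2 * fA n j + 1 - ee n j = int (nthp j)" using 3 k by (simp add: fA_def ee_def)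
    thus ?thesis by simp
  qed
qed

lemma wx_odd:
  assumes n: "n \<ge> 2" and j: "j \<ge> 1"
  shows "2 * ((wx n j - 1) div 2) + 1 = wx n j"
proof -
  consider "j = n-1" | "j = n" | "j \<noteq> n-1" "j \<noteq> n" by blast
  thus ?thesis
  proof cases
    case 1 thus ?thesis by (simp add: wx_def)
  next
    case 2 thus ?thesis using n by (simp add: wx_def)
  next
    case 3
    obtain k where k: "nthp j = 2*k+1" using nthp_odd[OF j] oddE by blast
    show ?thesis using 3 k by (simp add: wx_def)
  qed
qed

lemma MM_mult:
  assumes "m \<ge> (1::int)"
  shows "2*m+1 \<le> (2*m+1) * MM n"
proof -
  have "(2*m+1) * 1 \<le> (2*m+1) * MM n" using MM(1) assms by (intro mult_left_mono) auto
  thus ?thesis by simp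
qed

lemma partA:
  assumes n: "n \<ge> 2" and m: "int (nthp (n-1)) = 2*m+1" and m1: "m \<ge> 1"
  shows "enat (nthp (n-1)) \<le> msr (map nthp [1..<n+1])"
proof (rule frame[where X="\<lambda>y. 2*y+1" and e="ee n" and f="fA n"
      and lo="-m" and hi="m-1" and u="-m-1" and v="-m-1 + (2*m+1) * MM n"])
  show "grid (nthp j) (fA n j) y \<longleftrightarrow> \<not> int (nthp j) dvd 2*y+1 - ee n j" if j: "j \<in> {1..<n+1}" for j y
  proof (rule grid_odd)
    show "odd (nthp j)" using j nthp_odd by simp
    show "int (nthp j) dvd 2 * fA n j + 1 - ee n j" using fA_dvd[OF n] j by simp
  qed
  show "\<exists>y. int (nthp j) dvd 2*y+1 - ee n j \<and> (\<forall>j'\<in>{1..<n+1}. j' \<noteq> j \<longrightarrow> \<not> int (nthp j') dvd 2*y+1 - ee n j')"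
    if j: "j \<in> {1..<n+1}" for j
  proof (intro exI conjI ballI impI)
    have w: "2 * ((wx n j - 1) div 2) + 1 = wx n j" using wx_odd[OF n] j by simp
    have W: "int (nthp j) dvd wx n j - ee n j \<and> (\<forall>j'\<le>n. j' \<noteq> j \<longrightarrow> \<not> int (nthp j') dvd wx n j - ee n j')"
      using witx[OF n] j by simp
    show "int (nthp j) dvd 2 * ((wx n j - 1) div 2) + 1 - ee n j" unfolding w using W by blast
    fix j' assume "j' \<in> {1..<n+1}" "j' \<noteq> j"
    thus "\<not> int (nthp j') dvd 2 * ((wx n j - 1) div 2) + 1 - ee n j'" unfolding w using W by simp
  qed
  show "\<exists>j\<in>{1..<n+1}. int (nthp j) dvd 2*y+1 - ee n j" if "-m \<le> y" "y \<le> m - 1" for y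
  proof -
    have "\<bar>2*y+1\<bar> < int (nthp (n-1))" using that m by linarith
    from zerox[OF n this] obtain j where "j \<le> n" "int (nthp j) dvd 2*y+1 - ee n j" "odd (2*y+1) \<longrightarrow> j \<ge> 1"
      by blast
    thus ?thesis by (intro bexI[of _ j]) simp_all
  qed
  show "\<forall>j\<in>{1..<n+1}. \<not> int (nthp j) dvd 2*(-m-1)+1 - ee n j"
  proof
    fix j assume "j \<in> {1..<n+1}"
    hence "\<not> int (nthp j) dvd (- int (nthp (n-1)) + 0) - ee n j" using onex[OF n, of j 0] by simp
    moreover have "2*(-m-1)+1 = - int (nthp (n-1)) + 0" using m by simp
    ultimately show "\<not> int (nthp j) dvd 2*(-m-1)+1 - ee n j" by simp
  qed
  show "\<forall>j\<in>{1..<n+1}. \<not> int (nthp j) dvd 2*(-m-1 + (2*m+1) * MM n)+1 - ee n j"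
  proof
    fix j assume j: "j \<in> {1..<n+1}"
    have "int (nthp j) dvd MM n" using MM(2)[of j n] j by simp
    hence "int (nthp j) dvd 2 * (2*m+1) * MM n" by (rule dvd_mult)
    hence "\<not> int (nthp j) dvd (- int (nthp (n-1)) + 2 * (2*m+1) * MM n) - ee n j" using onex[OF n, of j] j by simp
    moreover have "2*(-m-1 + (2*m+1) * MM n)+1 = - int (nthp (n-1)) + 2 * (2*m+1) * MM n" using m
      by (simp add: algebra_simps)
    ultimately show "\<not> int (nthp j) dvd 2*(-m-1 + (2*m+1) * MM n)+1 - ee n j" by simp
  qed
  show "m - 1 < -m-1 + (2*m+1) * MM n" using MM_mult[OF m1, of n] by simp
  show "int (nthp (n-1)) \<le> m - 1 - - m + 2" using m by simp
  show "-m-1 < -m" by simp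
  show "-m \<le> m - 1 + 1" using m1 by simp
qed

lemma partB:
  assumes n: "n \<ge> 2" and m: "int (nthp (n-1)) = 2*m+1" and m1: "m \<ge> 1"
  shows "enat (2 * nthp (n-1)) \<le> msr (map nthp [0..<n+1])"
proof (rule frame[where X="\<lambda>y. y" and e="ee n" and f="ee n"
      and lo="-2*m" and hi="2*m" and u="-2*m-1" and v="-2*m-1 + 2*(2*m+1) * MM n"])
  show "grid (nthp j) (ee n j) y \<longleftrightarrow> \<not> int (nthp j) dvd y - ee n j" for j y
    by (simp add: grid_dvd)
  show "\<exists>y. int (nthp j) dvd y - ee n j \<and> (\<forall>j'\<in>{0..<n+1}. j' \<noteq> j \<longrightarrow> \<not> int (nthp j') dvd y - ee n j')"
    if j: "j \<in> {0..<n+1}" for j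
  proof (intro exI conjI ballI impI)
    have W: "int (nthp j) dvd wx n j - ee n j \<and> (\<forall>j'\<le>n. j' \<noteq> j \<longrightarrow> \<not> int (nthp j') dvd wx n j - ee n j')"
      using witx[OF n] j by simp
    show "int (nthp j) dvd wx n j - ee n j" using W by blast
    fix j' assume "j' \<in> {0..<n+1}" "j' \<noteq> j"
    thus "\<not> int (nthp j') dvd wx n j - ee n j'" using W by simp
  qed
  show "\<exists>j\<in>{0..<n+1}. int (nthp j) dvd y - ee n j" if "-2*m \<le> y" "y \<le> 2*m" for y
  proof -
    have "\<bar>y\<bar> < int (nthp (n-1))" using that m by linarith
    from zerox[OF n this] obtain j where "j \<le> n" "int (nthp j) dvd y - ee n j"
      by blast
    thus ?thesis by (intro bexI[of _ j]) simp_all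
  qed
  show "\<forall>j\<in>{0..<n+1}. \<not> int (nthp j) dvd (-2*m-1) - ee n j"
  proof
    fix j assume "j \<in> {0..<n+1}"
    hence "\<not> int (nthp j) dvd (- int (nthp (n-1)) + 0) - ee n j" using onex[OF n, of j 0] by simp
    moreover have "-2*m-1 = - int (nthp (n-1)) + 0" using m by simp
    ultimately show "\<not> int (nthp j) dvd (-2*m-1) - ee n j" by simp
  qed
  show "\<forall>j\<in>{0..<n+1}. \<not> int (nthp j) dvd (-2*m-1 + 2*(2*m+1) * MM n) - ee n j"
  proof
    fix j assume j: "j \<in> {0..<n+1}"
    have "int (nthp j) dvd MM n" using MM(2)[of j n] j by simp
    hence "int (nthp j) dvd 2 * (2*m+1) * MM n" by (rule dvd_mult)
    hence "\<not> int (nthp j) dvd (- int (nthp (n-1)) + 2 * (2*m+1) * MM n) - ee n j" using onex[OF n, of j] j by simp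
    moreover have "-2*m-1 + 2*(2*m+1) * MM n = - int (nthp (n-1)) + 2 * (2*m+1) * MM n" using m
      by (simp add: algebra_simps)
    ultimately show "\<not> int (nthp j) dvd (-2*m-1 + 2*(2*m+1) * MM n) - ee n j" by simp
  qed
  show "2*m < -2*m-1 + 2*(2*m+1) * MM n"
  proof -
    define t where "t = (2*m+1) * MM n"
    have t1: "2*m+1 \<le> t" using MM_mult[OF m1, of n] unfolding t_def .
    have "2*(2*m+1) * MM n = 2*t" unfolding t_def by (rule mult.assoc)
    thus ?thesis using t1 m1 by linarith
  qed
  show "int (2 * nthp (n-1)) \<le> 2*m - -2*m + 2" using m by simp
  show "-2*m-1 < -2*m" by simp
  show "-2*m \<le> 2*m + 1" using m1 by simp
qed

theorem theorem13:
  fixes n :: nat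
  assumes "n \<ge> 1"
  shows "msr (map nthp [1..<n+1]) \<ge> enat (nthp (n - 1))
       \<and> msr (map nthp [0..<n+1]) \<ge> enat (2 * nthp (n - 1))"
proof (cases "n = 1")
  case True
  have q3: "nthp 1 \<ge> 3" using nthp_ge3 by simp
  have A: "enat 2 \<le> msr (map nthp [1..<2])"
  proof (rule frame[where X="\<lambda>y. y" and e="\<lambda>_. 0" and f="\<lambda>_. 0" and lo=0 and hi=0 and u="-1" and v=1])
    show "grid (nthp j) 0 y \<longleftrightarrow> \<not> int (nthp j) dvd y - 0" for j y by (simp add: grid_dvd)
    show "\<exists>y. int (nthp j) dvd y - 0 \<and> (\<forall>j'\<in>{1..<2}. j' \<noteq> j \<longrightarrow> \<not> int (nthp j') dvd y - 0)"
      if "j \<in> {1..<2}" for j using that by (intro exI[of _ 0]) auto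
    show "\<exists>j\<in>{1..<2}. int (nthp j) dvd y - 0" if "0 \<le> y" "y \<le> (0::int)" for y
      using that by auto
    have s12: "{Suc 0..<2} = {Suc 0}" by auto
    show "\<forall>j\<in>{1..<2}. \<not> int (nthp j) dvd - 1 - 0" using q3 small_ndvd'[of 1 "nthp 1"] by (simp add: s12)
    show "\<forall>j\<in>{1..<2}. \<not> int (nthp j) dvd 1 - 0" using q3 small_ndvd[of 1 "nthp 1"] by (simp add: s12)
  qed auto
  have d: "int (nthp 0) = 2" "\<not> int (nthp 1) dvd 1" "\<not> int (nthp 1) dvd -1"
     "\<not> int (nthp 1) dvd 2" "\<not> int (nthp 1) dvd -2" "\<not> (2::int) dvd 1" "\<not> (2::int) dvd -1" "\<not> (2::int) dvd 3"
    using q3 small_ndvd[of 1 "nthp 1"] small_ndvd'[of 1 "nthp 1"] small_ndvd[of 2 "nthp 1"] small_ndvd'[of 2 "nthp 1"] nthp_0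
    by simp_all
  have s02: "{0..<2::nat} = {0, 1}" by auto
  have B: "enat 4 \<le> msr (map nthp [0..<2])"
  proof (rule frame[where X="\<lambda>y. y" and e="\<lambda>j. if j = 0 then 0 else 1" and f="\<lambda>j. if j = 0 then 0 else 1"
        and lo=0 and hi=2 and u="-1" and v=3])
    show "grid (nthp j) (if j = 0 then 0 else 1) y \<longleftrightarrow> \<not> int (nthp j) dvd y - (if j = 0 then 0 else 1)" for j y
      by (simp add: grid_dvd)
    show "\<exists>y. int (nthp j) dvd y - (if j = 0 then 0 else 1) \<and> (\<forall>j'\<in>{0..<2}. j' \<noteq> j \<longrightarrow> \<not> int (nthp j') dvd y - (if j' = 0 then 0 else 1))"
      if "j \<in> {0..<2}" for j
    proof -
      have "j = 0 \<or> j = 1" using that by auto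
      thus ?thesis
      proof
        assume j: "j = 0"
        have "int (nthp j) dvd 0 - (if j = 0 then 0 else 1) \<and> (\<forall>j'\<in>{0..<2}. j' \<noteq> j \<longrightarrow> \<not> int (nthp j') dvd 0 - (if j' = 0 then 0 else 1))"
          unfolding s02 using j d by simp
        thus ?thesis by blast
      next
        assume j: "j = 1"
        have "int (nthp j) dvd 1 - (if j = 0 then 0 else 1) \<and> (\<forall>j'\<in>{0..<2}. j' \<noteq> j \<longrightarrow> \<not> int (nthp j') dvd 1 - (if j' = 0 then 0 else 1))"
          unfolding s02 using j d by simp
        thus ?thesis by blast
      qed
    qed
    show "\<exists>j\<in>{0..<2}. int (nthp j) dvd y - (if j = 0 then 0 else 1)" if "0 \<le> y" "y \<le> (2::int)" for y
    proof -
      have "y = 0 \<or> y = 1 \<or> y = 2" using that by auto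
      thus ?thesis unfolding s02 using d by auto
    qed
    show "\<forall>j\<in>{0..<2}. \<not> int (nthp j) dvd - 1 - (if j = 0 then 0 else 1)"
      unfolding s02 using d by simp
    show "\<forall>j\<in>{0..<2}. \<not> int (nthp j) dvd 3 - (if j = 0 then 0 else 1)"
      unfolding s02 using d by simp
  qed auto
  have e: "n+1 = 2" "n-1 = 0" using True by auto
  show ?thesis unfolding e nthp_0 using A B by auto
next
  case False
  hence n: "n \<ge> 2" using assms by simp
  note b = basics[OF n]
  have "odd (nthp (n-1))" using nthp_odd n by simp
  then obtain k where k: "nthp (n-1) = 2*k+1" by (rule oddE)
  define m where "m = int k"
  have m: "int (nthp (n-1)) = 2*m+1" using k m_def by simp
  have m1: "m \<ge> 1" using m b by linarith
  have A: "enat (nthp (n-1)) \<le> msr (map nthp [1..<n+1])" by (rule partA[OF n m m1])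
  have B: "enat (2 * nthp (n-1)) \<le> msr (map nthp [0..<n+1])" by (rule partB[OF n m m1])
  show ?thesis using A B by simp
qed

end
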